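(* Let $\pi\in\mathfrak{S}_m$. If $\pi_1=1$, $\pi_m=m$, and $|\mathcal{O}_\pi|=2$, then $\pi$ and its reversal $\pi^R=\pi_m\pi_{m-1}\cdots\pi_1$ are super-strongly c-Wilf equivalent.
   Context: The standardization $\operatorname{st}(w)$ of a word of distinct integers replaces its smallest entry by 1, the next smallest by 2, etc. For $\pi\in\mathfrak{S}_m$ and $\sigma\in\mathfrak{S}_n$, $\operatorname{Em}(\pi,\sigma)=\{i\in[n-m+1]:\operatorname{st}(\sigma_i\cdots\sigma_{i+m-1})=\pi\}$. For a set $S$ of positive integers, $a^\pi_{n,S}$ is the number of $\sigma\in\mathfrak{S}_n$ with $\operatorname{Em}(\pi,\sigma)=S$; $\pi,\tau$ are super-strongly c-Wilf equivalent if $a^\pi_{n,S}=a^\tau_{n,S}$ for all $n,S$. The overlap set is $\mathcal{O}_\pi=\{i\in[m-1]:\operatorname{st}(\pi_{i+1}\cdots\pi_m)=\operatorname{st}(\pi_1\cdots\pi_{m-i})\}$. *)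

theory Defs
  imports Main
begin

text \<open>Permutations of [m] are represented as lists of naturals (one-line notation),
  positions are 1-indexed in the paper and translated to 0-indexed list access.\<close>

definition is_perm :: "nat \<Rightarrow> nat list \<Rightarrow> bool" where
  "is_perm m p \<longleftrightarrow> length p = m \<and> distinct p \<and> set p = {1..m}"

definition st :: "nat list \<Rightarrow> nat list" where
  "st w = map (\<lambda>x. card {y \<in> set w. y < x} + 1) w"

definition Em :: "nat list \<Rightarrow> nat list \<Rightarrow> nat set" where
  "Em p s = {i. 1 \<le> i \<and> i + length p \<le> length s + 1
                 \<and> st (take (length p) (drop (i - 1) s)) = p}"

definition a_count :: "nat list \<Rightarrow> nat \<Rightarrow> nat set \<Rightarrow> nat" where
  "a_count p n S = card {s. is_perm n s \<and> Em p s = S}"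

definition super_strongly_cWilf_equiv :: "nat list \<Rightarrow> nat list \<Rightarrow> bool" where
  "super_strongly_cWilf_equiv p q \<longleftrightarrow> (\<forall>n S. a_count p n S = a_count q n S)"

definition overlap_set :: "nat list \<Rightarrow> nat set" where
  "overlap_set p = {i. 1 \<le> i \<and> i \<le> length p - 1 \<and>
                      st (drop i p) = st (take (length p - i) p)}"

end

theory Submission
  imports Defs
begin


definition rk :: "nat set \<Rightarrow> nat \<Rightarrow> nat" where
  "rk V v = card {u\<in>V. u < v}"

definition compl :: "nat set \<Rightarrow> nat \<Rightarrow> nat" where
  "compl V v = inv_into V (rk V) (card V - Suc (rk V v))"

lemma rk_less: assumes "finite V" "v < w" "v \<in> V" shows "rk V v < rk V w"
  unfolding rk_def by (rule psubset_card_mono) (use assms in auto)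

lemma rk_less_iff: "finite V \<Longrightarrow> v \<in> V \<Longrightarrow> w \<in> V \<Longrightarrow> rk V v < rk V w \<longleftrightarrow> v < w"
  by (metis rk_less less_asym linorder_neqE_nat)

lemma rk_inj: "finite V \<Longrightarrow> inj_on (rk V) V"
  by (metis inj_onI linorder_neqE_nat rk_less nat_neq_iff)

lemma rk_range: assumes "finite V" "v \<in> V" shows "rk V v < card V"
  unfolding rk_def by (rule psubset_card_mono) (use assms in auto)

lemma rk_image: assumes "finite V" shows "rk V ` V = {..<card V}"
proof -
  have "rk V ` V \<subseteq> {..<card V}" using rk_range assms by auto
  moreover have "card (rk V ` V) = card {..<card V}"
    using card_image[OF rk_inj[OF assms]] by simp
  ultimately show ?thesis by (simp add: card_subset_eq)
qed

lemma compl_in: assumes "finite V" "v \<in> V" shows "compl V v \<in> V"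
proof -
  have "0 < card V" using rk_range[OF assms] by simp
  then show ?thesis unfolding compl_def by (intro inv_into_into) (use rk_image[OF assms(1)] in auto)
qed

lemma rk_compl: assumes "finite V" "v \<in> V" shows "rk V (compl V v) = card V - Suc (rk V v)"
proof -
  have "0 < card V" using rk_range[OF assms] by simp
  then show ?thesis unfolding compl_def by (intro f_inv_into_f) (use rk_image[OF assms(1)] in auto)
qed

lemma compl_compl: assumes "finite V" "v \<in> V" shows "compl V (compl V v) = v"
proof -
  have "compl V (compl V v) = inv_into V (rk V) (card V - Suc (card V - Suc (rk V v)))"
    unfolding compl_def[of V "compl V v"] using rk_compl[OF assms] by simp
  also have "card V - Suc (card V - Suc (rk V v)) = rk V v" using rk_range[OF assms] by simp
  also have "inv_into V (rk V) (rk V v) = v" by (rule inv_into_f_f[OF rk_inj[OF assms(1)] assms(2)])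
  finally show ?thesis .
qed

lemma compl_less: assumes "finite V" "v \<in> V" "w \<in> V"
  shows "compl V v < compl V w \<longleftrightarrow> w < v"
proof -
  have "compl V v < compl V w \<longleftrightarrow> rk V (compl V v) < rk V (compl V w)"
    using rk_less_iff compl_in assms by metis
  also have "\<dots> \<longleftrightarrow> rk V w < rk V v" using rk_compl assms rk_range[OF assms(1)] by force
  also have "\<dots> \<longleftrightarrow> w < v" using rk_less_iff assms by metis
  finally show ?thesis .
qed

lemma compl_max: assumes "finite V" "v \<in> V" "w \<in> V" "\<forall>u\<in>V. u \<le> v" "\<forall>u\<in>V. w \<le> u"
  shows "compl V v = w" "compl V w = v"
proof -
  have "\<forall>u\<in>V. compl V v \<le> u"
  proof
    fix u assume u: "u \<in> V"
    have "compl V v \<le> compl V (compl V u)"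
      using compl_less[OF assms(1) compl_in[OF assms(1) u] assms(2)] assms(4) compl_in[OF assms(1) u]
      by (metis not_less)
    thus "compl V v \<le> u" using compl_compl[OF assms(1) u] by simp
  qed
  then show "compl V v = w" using assms compl_in by (meson antisym)
  then show "compl V w = v" using compl_compl assms by metis
qed

definition segV :: "nat \<Rightarrow> nat \<Rightarrow> nat list \<Rightarrow> nat set" where
  "segV a e s = (\<lambda>j. s ! j) ` {a..e}"

definition flip :: "nat \<Rightarrow> nat \<Rightarrow> nat list \<Rightarrow> nat list" where
  "flip a e s = map (\<lambda>j. if a \<le> j \<and> j \<le> e then compl (segV a e s) (s ! (a + e - j)) else s ! j) [0..<length s]"

lemma length_flip[simp]: "length (flip a e s) = length s"
  by (simp add: flip_def)

lemma nth_flip: "j < length s \<Longrightarrow> flip a e s ! j = (if a \<le> j \<and> j \<le> e then compl (segV a e s) (s ! (a + e - j)) else s ! j)"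
  by (simp add: flip_def)

lemma finite_segV[simp]: "finite (segV a e s)" by (simp add: segV_def)

lemma segV_mem: "a \<le> j \<Longrightarrow> j \<le> e \<Longrightarrow> s ! j \<in> segV a e s" by (auto simp: segV_def)

lemma refl_image: "(\<lambda>j. a + e - j) ` {a..(e::nat)} = {a..e}"
proof (rule set_eqI, rule iffI)
  fix x assume "x \<in> (\<lambda>j. a + e - j) ` {a..e}" thus "x \<in> {a..e}" by auto
next
  fix x assume x: "x \<in> {a..e}"
  hence "a + e - x \<in> {a..e}" "x = a + e - (a + e - x)" by auto
  thus "x \<in> (\<lambda>j. a + e - j) ` {a..e}" by blast
qed

lemma segV_flip: assumes "e < length s" shows "segV a e (flip a e s) = segV a e s"
proof -
  let ?V = "segV a e s"
  have "segV a e (flip a e s) = (\<lambda>j. compl ?V (s ! (a + e - j))) ` {a..e}"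
    unfolding segV_def[of a e "flip a e s"] by (rule image_cong) (use assms in \<open>auto simp: nth_flip\<close>)
  also have "\<dots> = compl ?V ` ((\<lambda>j. s ! j) ` ((\<lambda>j. a + e - j) ` {a..e}))" by (simp add: image_image)
  also have "\<dots> = compl ?V ` ?V" unfolding refl_image segV_def ..
  also have "\<dots> = ?V"
  proof
    show "compl ?V ` ?V \<subseteq> ?V" using compl_in by auto
    show "?V \<subseteq> compl ?V ` ?V" using compl_compl compl_in by (metis finite_segV image_eqI subsetI)
  qed
  finally show ?thesis .
qed

lemma flip_flip: assumes "e < length s" shows "flip a e (flip a e s) = s"
proof (rule nth_equalityI)
  show "length (flip a e (flip a e s)) = length s" by simp
  fix j assume j: "j < length (flip a e (flip a e s))"
  show "flip a e (flip a e s) ! j = s ! j"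
  proof (cases "a \<le> j \<and> j \<le> e")
    case True
    then have "a + e - j < length s" "a \<le> a + e - j" "a + e - j \<le> e" "a + e - (a + e - j) = j" using assms by auto
    then show ?thesis using True j assms
      by (simp add: nth_flip segV_flip compl_compl segV_mem)
  next
    case False then show ?thesis using j by (auto simp: nth_flip)
  qed
qed

lemma flip_perm: assumes "is_perm n s" "e < n" shows "is_perm n (flip a e s)"
proof -
  let ?V = "segV a e s"
  have len: "length s = n" and ds: "distinct s" and ss: "set s = {1..n}" using assms unfolding is_perm_def by auto
  have notV: "s ! j \<notin> ?V" if "j < n" "\<not> (a \<le> j \<and> j \<le> e)" for j
  proof
    assume "s ! j \<in> ?V" then obtain i where "a \<le> i" "i \<le> e" "s ! j = s ! i" unfolding segV_def by auto
    then show False using that ds len assms(2) nth_eq_iff_index_eq by (metis le_less_trans)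
  qed
  have Vsub: "?V \<subseteq> set s" unfolding segV_def using assms(2) len by auto
  have dist: "distinct (flip a e s)"
    unfolding flip_def distinct_map
  proof
    show "distinct [0..<length s]" by simp
    show "inj_on (\<lambda>j. if a \<le> j \<and> j \<le> e then compl ?V (s ! (a + e - j)) else s ! j) (set [0..<length s])"
    proof (rule inj_onI)
      fix x y assume x: "x \<in> set [0..<length s]" and y: "y \<in> set [0..<length s]"
        and eq: "(if a \<le> x \<and> x \<le> e then compl ?V (s ! (a + e - x)) else s ! x) =
                 (if a \<le> y \<and> y \<le> e then compl ?V (s ! (a + e - y)) else s ! y)"
      have xl: "x < n" and yl: "y < n" using x y len by auto
      show "x = y"
      proof (cases "a \<le> x \<and> x \<le> e"; cases "a \<le> y \<and> y \<le> e")
        assume cx: "a \<le> x \<and> x \<le> e" and cy: "a \<le> y \<and> y \<le> e"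
        have m1: "s ! (a + e - x) \<in> ?V" "s ! (a + e - y) \<in> ?V" using cx cy by (auto intro!: segV_mem)
        have "compl ?V (s ! (a + e - x)) = compl ?V (s ! (a + e - y))" using eq cx cy by simp
        hence "s ! (a + e - x) = s ! (a + e - y)" using compl_compl m1 by (metis finite_segV)
        moreover have "a + e - x < length s" "a + e - y < length s" using cx cy assms(2) len by auto
        ultimately have "a + e - x = a + e - y" using ds nth_eq_iff_index_eq by blast
        thus "x = y" using cx cy by auto
      next
        assume cx: "a \<le> x \<and> x \<le> e" and cy: "\<not> (a \<le> y \<and> y \<le> e)"
        have "compl ?V (s ! (a + e - x)) \<in> ?V" using cx by (auto intro!: compl_in segV_mem)
        thus "x = y" using eq cx cy notV[OF yl cy] by simp
      next
        assume cx: "\<not> (a \<le> x \<and> x \<le> e)" and cy: "a \<le> y \<and> y \<le> e"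
        have "compl ?V (s ! (a + e - y)) \<in> ?V" using cy by (auto intro!: compl_in segV_mem)
        thus "x = y" using eq cx cy notV[OF xl cx] by simp
      next
        assume cx: "\<not> (a \<le> x \<and> x \<le> e)" and cy: "\<not> (a \<le> y \<and> y \<le> e)"
        have "s ! x = s ! y" using eq unfolding if_not_P[OF cx] if_not_P[OF cy] .
        thus "x = y" using ds xl yl len nth_eq_iff_index_eq by metis
      qed
    qed
  qed
  have sub: "set (flip a e s) \<subseteq> {1..n}"
  proof
    fix v assume "v \<in> set (flip a e s)"
    then obtain j where j: "j < n" "v = flip a e s ! j" by (auto simp: in_set_conv_nth len)
    show "v \<in> {1..n}"
    proof (cases "a \<le> j \<and> j \<le> e")
      case True
      then have "v \<in> ?V" using j len by (auto simp: nth_flip intro!: compl_in segV_mem)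
      then show ?thesis using Vsub ss by auto
    next
      case False
      then show ?thesis using j len ss by (auto simp: nth_flip)
    qed
  qed
  have "card (set (flip a e s)) = n" using dist distinct_card len by fastforce
  hence "set (flip a e s) = {1..n}" using sub by (simp add: card_subset_eq)
  thus ?thesis using dist len unfolding is_perm_def by simp
qed



definition occ :: "nat \<Rightarrow> (nat \<Rightarrow> nat \<Rightarrow> bool) \<Rightarrow> nat list \<Rightarrow> nat \<Rightarrow> bool" where
  "occ m R s j \<longleftrightarrow> j + m \<le> length s \<and> (\<forall>x<m. \<forall>y<m. (s ! (j + x) < s ! (j + y)) = R x y)"

definition rcR :: "nat \<Rightarrow> (nat \<Rightarrow> nat \<Rightarrow> bool) \<Rightarrow> nat \<Rightarrow> nat \<Rightarrow> bool" where
  "rcR m R x y \<longleftrightarrow> x < m \<and> y < m \<and> R (m - 1 - y) (m - 1 - x)"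

definition mmf :: "nat \<Rightarrow> (nat \<Rightarrow> nat \<Rightarrow> bool) \<Rightarrow> bool" where
  "mmf m R \<longleftrightarrow> (\<forall>x. 0 < x \<longrightarrow> x < m \<longrightarrow> R 0 x) \<and> (\<forall>x. x < m - 1 \<longrightarrow> R x (m - 1))"

definition bnd :: "nat \<Rightarrow> (nat \<Rightarrow> nat \<Rightarrow> bool) \<Rightarrow> bool" where
  "bnd m R \<longleftrightarrow> (\<forall>x y. R x y \<longrightarrow> x < m \<and> y < m)"

definition ovl :: "nat \<Rightarrow> (nat \<Rightarrow> nat \<Rightarrow> bool) \<Rightarrow> nat \<Rightarrow> bool" where
  "ovl m R d \<longleftrightarrow> (\<forall>x<m-d. \<forall>y<m-d. R (d + x) (d + y) = R x y)"

definition good :: "nat \<Rightarrow> nat set \<Rightarrow> (nat \<Rightarrow> nat \<Rightarrow> nat \<Rightarrow> bool) \<Rightarrow> nat list \<Rightarrow> bool" where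
  "good m T P s \<longleftrightarrow> (\<forall>j\<in>T. occ m (P j) s j)"

lemma rcR_rcR: "bnd m R \<Longrightarrow> rcR m (rcR m R) = R"
proof (intro ext)
  fix x y assume b: "bnd m R"
  show "rcR m (rcR m R) x y = R x y"
  proof (cases "x < m \<and> y < m")
    case True
    then have "m - 1 - (m - 1 - x) = x" "m - 1 - (m - 1 - y) = y" by auto
    then show ?thesis using True unfolding rcR_def by auto
  next
    case False then show ?thesis using b unfolding rcR_def bnd_def by auto
  qed
qed

lemma mmf_rcR: assumes "mmf m R" shows "mmf m (rcR m R)"
  using assms unfolding mmf_def rcR_def by (auto simp: Suc_pred')

lemma bnd_rcR: "bnd m (rcR m R)" unfolding bnd_def rcR_def by auto

lemma occ_cong: assumes "length s' = length s" "\<forall>x<m. s' ! (j + x) = s ! (j + x)"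
  shows "occ m R s' j = occ m R s j"
  unfolding occ_def using assms by auto

lemma flip_out: "j < length s \<Longrightarrow> j < a \<or> e < j \<Longrightarrow> flip a e s ! j = s ! j"
  by (auto simp: nth_flip)

lemma flip_ends:
  assumes "a \<le> e" "e < length s" "\<forall>p. a \<le> p \<longrightarrow> p \<le> e \<longrightarrow> s ! a \<le> s ! p \<and> s ! p \<le> s ! e"
  shows "flip a e s ! a = s ! a" "flip a e s ! e = s ! e"
proof -
  let ?V = "segV a e s"
  have mx: "\<forall>u\<in>?V. u \<le> s ! e" and mn: "\<forall>u\<in>?V. s ! a \<le> u" using assms(3) unfolding segV_def by auto
  have inV: "s ! e \<in> ?V" "s ! a \<in> ?V" using assms(1) by (auto intro!: segV_mem)
  note cm = compl_max[OF finite_segV inV mx mn]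
  show "flip a e s ! a = s ! a" using assms cm by (simp add: nth_flip)
  show "flip a e s ! e = s ! e" using assms cm by (simp add: nth_flip)
qed

lemma occ_flip_in:
  assumes "e < length s" "a \<le> j" "j + m \<le> Suc e" "occ m Q s (a + e + 1 - (j + m))"
  shows "occ m (rcR m Q) (flip a e s) j"
proof -
  let ?V = "segV a e s"
  let ?j = "a + e + 1 - (j + m)"
  have key: "flip a e s ! (j + x) = compl ?V (s ! (?j + (m - 1 - x)))" "s ! (?j + (m - 1 - x)) \<in> ?V"
    if "x < m" for x
  proof -
    have eq: "a + e - (j + x) = ?j + (m - 1 - x)" using that assms by arith
    have c: "a \<le> j + x" "j + x \<le> e" "j + x < length s" using that assms by auto
    have "flip a e s ! (j + x) = compl ?V (s ! (a + e - (j + x)))"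
      using nth_flip[OF c(3), of a e] c(1,2) by simp
    then show "flip a e s ! (j + x) = compl ?V (s ! (?j + (m - 1 - x)))"
      unfolding eq .
    have "a \<le> ?j + (m - 1 - x)" "?j + (m - 1 - x) \<le> e" using that assms by auto
    then show "s ! (?j + (m - 1 - x)) \<in> ?V" by (rule segV_mem)
  qed
  have o: "\<And>u v. u<m \<Longrightarrow> v<m \<Longrightarrow> (s!(?j+u) < s!(?j+v)) = Q u v" using assms(4) unfolding occ_def by blast
  have "\<forall>x<m. \<forall>y<m. (flip a e s ! (j + x) < flip a e s ! (j + y)) = rcR m Q x y"
  proof (intro allI impI)
    fix x y assume xy: "x < m" "y < m"
    have "(flip a e s ! (j + x) < flip a e s ! (j + y)) = (s ! (?j + (m - 1 - y)) < s ! (?j + (m - 1 - x)))"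
      using key[OF xy(1)] key[OF xy(2)] compl_less[OF finite_segV] by simp
    also have "\<dots> = Q (m - 1 - y) (m - 1 - x)" by (rule o) (use xy in auto)
    finally show "(flip a e s ! (j + x) < flip a e s ! (j + y)) = rcR m Q x y" using xy by (simp add: rcR_def)
  qed
  then show ?thesis using assms unfolding occ_def by simp
qed



definition adm :: "nat \<Rightarrow> nat \<Rightarrow> nat set \<Rightarrow> bool" where
  "adm m k T \<longleftrightarrow> (\<forall>i\<in>T. \<forall>j\<in>T. i < j \<longrightarrow> j - i = k \<or> m - 1 \<le> j - i)"

lemma div_facts: assumes "0 < (k::nat)" shows "n div k * k \<le> n" "n < n div k * k + k"
proof -
  have "n div k * k + n mod k = n" by (rule div_mult_mod_eq)
  moreover have "n mod k < k" using assms by simp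
  ultimately show "n div k * k \<le> n" "n < n div k * k + k" by linarith+
qed

lemma cover:
  fixes k m r a p :: nat
  assumes "1 \<le> k" "k < m" "1 \<le> r" "a \<le> p" "p \<le> a + (r - 1) * k + (m - 1)"
  shows "\<exists>i<r. a + i * k \<le> p \<and> p \<le> a + i * k + (m - 1)"
proof -
  define q where "q = (p - a) div k"
  have kpos: "0 < k" using assms by simp
  note df = div_facts[OF kpos, of "p - a", folded q_def]
  show ?thesis
  proof (cases "q < r")
    case True
    then show ?thesis using df assms by (intro exI[of _ q]) auto
  next
    case False
    then have h: "(r - 1) * k \<le> q * k" by (intro mult_le_mono1) simp
    have "a + (r - 1) * k \<le> p" using h df(1) assms(4) by linarith
    moreover have "r - 1 < r" using assms(3) by simp
    ultimately show ?thesis using assms(5) by blast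
  qed
qed

lemma seg_minmax:
  assumes "2 \<le> m" "1 \<le> k" "k < m" "1 \<le> r" "mmf m Q" "\<forall>i<r. occ m Q s (a + i * k)"
    "a \<le> p" "p \<le> a + (r - 1) * k + (m - 1)"
  shows "s ! a \<le> s ! p \<and> s ! p \<le> s ! (a + (r - 1) * k + (m - 1))"
proof -
  let ?E = "a + (r - 1) * k + (m - 1)"
  have o: "\<And>i x y. i < r \<Longrightarrow> x < m \<Longrightarrow> y < m \<Longrightarrow> (s ! (a + i * k + x) < s ! (a + i * k + y)) = Q x y"
    using assms(6) unfolding occ_def by blast
  have q0: "\<And>x. 0 < x \<Longrightarrow> x < m \<Longrightarrow> Q 0 x" and qm: "\<And>x. x < m - 1 \<Longrightarrow> Q x (m - 1)"
    using assms(5) unfolding mmf_def by auto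
  have lo: "i < r \<Longrightarrow> s ! a \<le> s ! (a + i * k)" for i
  proof (induction i)
    case 0 then show ?case by simp
  next
    case (Suc i)
    have "s ! (a + i * k + 0) < s ! (a + i * k + k)" using o[of i 0 k] q0[of k] Suc.prems assms by simp
    moreover have e: "a + Suc i * k = a + i * k + k" by simp
    ultimately show ?case unfolding e using Suc by simp
  qed
  have hi: "\<forall>i. i + d = r - 1 \<longrightarrow> s ! (a + i * k + (m - 1)) \<le> s ! ?E" for d
  proof (induction d)
    case 0 then show ?case by simp
  next
    case (Suc d)
    show ?case
    proof (intro allI impI)
      fix i assume i: "i + Suc d = r - 1"
      have "Suc i + d = r - 1" using i by simp
      with Suc.IH have "s ! (a + Suc i * k + (m - 1)) \<le> s ! ?E" by blast
      moreover have "s ! (a + Suc i * k + (m - 1 - k)) < s ! (a + Suc i * k + (m - 1))"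
        using o[of "Suc i" "m - 1 - k" "m - 1"] qm[of "m - 1 - k"] i assms by simp
      moreover have eq: "a + i * k + (m - 1) = a + Suc i * k + (m - 1 - k)" using assms by simp
      ultimately show "s ! (a + i * k + (m - 1)) \<le> s ! ?E" unfolding eq by linarith
    qed
  qed
  obtain i where i: "i < r" "a + i * k \<le> p" "p \<le> a + i * k + (m - 1)"
    using cover[OF assms(2,3,4,7,8)] by blast
  have "s ! (a + i * k) \<le> s ! p"
  proof (cases "p = a + i * k")
    case False
    then have "s ! (a + i * k + 0) < s ! (a + i * k + (p - (a + i * k)))"
      using o[of i 0 "p - (a + i * k)"] q0[of "p - (a + i * k)"] i assms by simp
    then show ?thesis using i by simp
  qed simp
  moreover have "s ! p \<le> s ! (a + i * k + (m - 1))"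
  proof (cases "p = a + i * k + (m - 1)")
    case False
    then have "s ! (a + i * k + (p - (a + i * k))) < s ! (a + i * k + (m - 1))"
      using o[of i "p - (a + i * k)" "m - 1"] qm[of "p - (a + i * k)"] i assms by simp
    then show ?thesis using i by simp
  qed simp
  moreover have "i + (r - 1 - i) = r - 1" using i by simp
  ultimately show ?thesis using lo[OF i(1)] hi[of "r - 1 - i"] by (meson le_trans)
qed

lemma outside:
  assumes "1 \<le> k" "k + 2 \<le> m" "adm m k T" "1 \<le> r" "\<forall>i<r. a + i * k \<in> T" "a + r * k \<notin> T"
    "\<forall>t\<in>T. t + k \<noteq> a" "j \<in> T" "\<forall>i<r. j \<noteq> a + i * k"
  shows "j + (m - 1) \<le> a \<or> a + (r - 1) * k + (m - 1) \<le> j"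
proof -
  have aT: "a \<in> T" using assms(4,5) by (metis add_0_right less_one mult_zero_left less_le_trans)
  have ad: "\<And>x y. x \<in> T \<Longrightarrow> y \<in> T \<Longrightarrow> x < y \<Longrightarrow> y - x = k \<or> m - 1 \<le> y - x"
    using assms(3) unfolding adm_def by blast
  have ja: "j \<noteq> a" using assms(9)[rule_format, of 0] assms(4) by simp
  show ?thesis
  proof (cases "j < a")
    case True
    have "a - j \<noteq> k" using assms(7) assms(8) True by fastforce
    with ad[OF assms(8) aT True] show ?thesis using True by linarith
  next
    case False
    with ja have ja: "a < j" by simp
    define q where "q = (j - a) div k"
    have kpos: "0 < k" using assms by simp
    note df = div_facts[OF kpos, of "j - a", folded q_def]
    show ?thesis
    proof (cases "q < r")
      case True
      let ?c = "a + q * k"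
      have cT: "?c \<in> T" using assms(5) True by simp
      have "?c \<noteq> j" using assms(9) True by metis
      then have "?c < j" "j - ?c < k" using df assms ja by auto
      then show ?thesis using ad[OF cT assms(8)] assms by auto
    next
      case False
      let ?c = "a + (r - 1) * k"
      have cT: "?c \<in> T" using assms(5,4) by simp
      have "r * k \<le> q * k" using False by (intro mult_le_mono1) simp
      moreover have ck: "?c + k = a + r * k" using assms(4) by (cases r) auto
      ultimately have c1: "?c < j" using df(1) ja assms(1) by linarith
      have c2: "j \<noteq> ?c + k" unfolding ck using assms(6,8) by blast
      show ?thesis using ad[OF cT assms(8)] c1 c2 by auto
    qed
  qed
qed



lemma good_E:
  assumes "2 \<le> m" "1 \<le> r" "\<forall>i<r. a + i * k \<in> T" "good m T P s"
  shows "a + (r - 1) * k + (m - 1) < length s"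
proof -
  have "a + (r - 1) * k \<in> T" using assms(2,3) by simp
  then have "occ m (P (a + (r - 1) * k)) s (a + (r - 1) * k)" using assms(4) unfolding good_def by blast
  then have "a + (r - 1) * k + m \<le> length s" unfolding occ_def by blast
  then show ?thesis using assms(1) by linarith
qed

lemma flip_good:
  assumes "2 \<le> m" "1 \<le> k" "k + 2 \<le> m" "adm m k T" "1 \<le> r" "\<forall>i<r. a + i * k \<in> T"
    "a + r * k \<notin> T" "\<forall>t\<in>T. t + k \<noteq> a"
    "\<forall>i<r. P (a + i * k) = Q" "mmf m Q" "good m T P s"
  shows "good m T (\<lambda>j. if (\<exists>i<r. j = a + i * k) then rcR m Q else P j)
           (flip a (a + (r - 1) * k + (m - 1)) s)"
proof -
  define E where "E = a + (r - 1) * k + (m - 1)"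
  have occs: "\<forall>i<r. occ m Q s (a + i * k)" using assms(6,9,11) unfolding good_def by metis
  have eL: "E < length s" unfolding E_def by (rule good_E[OF assms(1,5,6,11)])
  have mm: "\<forall>p. a \<le> p \<longrightarrow> p \<le> E \<longrightarrow> s ! a \<le> s ! p \<and> s ! p \<le> s ! E"
    unfolding E_def using seg_minmax[OF assms(1,2) _ assms(5,10) occs] assms(3) by simp
  have aE: "a \<le> E" unfolding E_def by simp
  note ends = flip_ends[OF aE eL mm]
  show ?thesis
    unfolding good_def E_def[symmetric]
  proof
    fix j assume jT: "j \<in> T"
    show "occ m (if \<exists>i<r. j = a + i * k then rcR m Q else P j) (flip a E s) j"
    proof (cases "\<exists>i<r. j = a + i * k")
      case True
      then obtain i where i: "i < r" "j = a + i * k" by blast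
      have h: "(r - 1) * k = (r - 1 - i) * k + i * k" using i(1) by (simp add: add_mult_distrib[symmetric])
      have eq: "a + E + 1 - (j + m) = a + (r - 1 - i) * k" unfolding E_def i(2) using h assms(1) by linarith
      have o: "occ m Q s (a + E + 1 - (j + m))" unfolding eq using occs i(1) by simp
      have "j + m \<le> Suc E" unfolding E_def i(2) using h assms(1) by linarith
      then have "occ m (rcR m Q) (flip a E s) j" using occ_flip_in[OF eL _ _ o] i(2) by simp
      then show ?thesis using True by simp
    next
      case False
      have out: "j + (m - 1) \<le> a \<or> E \<le> j" unfolding E_def
        using outside[OF assms(2,3,4,5,6,7,8) jT] False by blast
      have oj: "occ m (P j) s j" using jT assms(11) unfolding good_def by blast
      have "\<forall>x<m. flip a E s ! (j + x) = s ! (j + x)"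
      proof (intro allI impI)
        fix x assume x: "x < m"
        have jl: "j + x < length s" using oj x unfolding occ_def by simp
        show "flip a E s ! (j + x) = s ! (j + x)"
        proof (cases "j + x < a \<or> E < j + x")
          case True then show ?thesis using flip_out[OF jl] by blast
        next
          case False
          then have "j + x = a \<or> j + x = E" using out x by linarith
          then show ?thesis using ends by auto
        qed
      qed
      then have "occ m (P j) (flip a E s) j" using occ_cong[of "flip a E s" s m j] oj by simp
      then show ?thesis unfolding if_not_P[OF False] .
    qed
  qed
qed

lemma finite_perms: "finite {s. is_perm n s \<and> Q s}"
proof (rule finite_subset)
  show "{s. is_perm n s \<and> Q s} \<subseteq> {xs. set xs \<subseteq> {1..n} \<and> length xs = n}" unfolding is_perm_def by auto
  show "finite {xs. set xs \<subseteq> {1..n} \<and> length xs = n}" by (rule finite_lists_length_eq) simp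
qed

lemma flip_count:
  assumes "2 \<le> m" "1 \<le> k" "k + 2 \<le> m" "adm m k T" "1 \<le> r" "\<forall>i<r. a + i * k \<in> T"
    "a + r * k \<notin> T" "\<forall>t\<in>T. t + k \<noteq> a"
    "\<forall>i<r. P (a + i * k) = Q" "mmf m Q" "bnd m Q"
  shows "card {s. is_perm n s \<and> good m T P s} =
         card {s. is_perm n s \<and> good m T (\<lambda>j. if (\<exists>i<r. j = a + i * k) then rcR m Q else P j) s}"
proof -
  define E where "E = a + (r - 1) * k + (m - 1)"
  define P' where "P' = (\<lambda>j. if (\<exists>i<r. j = a + i * k) then rcR m Q else P j)"
  let ?A = "{s. is_perm n s \<and> good m T P s}"
  let ?B = "{s. is_perm n s \<and> good m T P' s}"
  have P'': "(\<lambda>j. if (\<exists>i<r. j = a + i * k) then rcR m (rcR m Q) else P' j) = P"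
  proof (rule ext)
    fix j show "(if (\<exists>i<r. j = a + i * k) then rcR m (rcR m Q) else P' j) = P j"
    proof (cases "\<exists>i<r. j = a + i * k")
      case True then obtain i where "i<r" "j = a+i*k" by blast
      then show ?thesis using assms(9) rcR_rcR[OF assms(11)] True by simp
    next
      case False show ?thesis unfolding P'_def if_not_P[OF False] by (rule refl)
    qed
  qed
  have AB: "flip a E s \<in> ?B" if "s \<in> ?A" for s
  proof -
    have g: "good m T P s" and p: "is_perm n s" using that by auto
    have "E < n" using good_E[OF assms(1,5,6) g] p unfolding E_def is_perm_def by simp
    then show ?thesis using flip_perm[OF p] flip_good[OF assms(1-10) g] unfolding E_def P'_def by simp
  qed
  have BA: "flip a E s \<in> ?A" if "s \<in> ?B" for s
  proof -
    have g: "good m T P' s" and p: "is_perm n s" using that by auto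
    have "E < n" using good_E[OF assms(1,5,6) g] p unfolding E_def is_perm_def by simp
    moreover have "\<forall>i<r. P' (a + i * k) = rcR m Q" unfolding P'_def by auto
    ultimately show ?thesis using flip_perm[OF p] flip_good[OF assms(1-8) _ mmf_rcR[OF assms(10)] g] P''
      unfolding E_def by simp
  qed
  have invA: "flip a E (flip a E s) = s" if "s \<in> ?A" for s
  proof -
    have "E < length s" using good_E[OF assms(1,5,6)] that unfolding E_def by blast
    then show ?thesis by (rule flip_flip)
  qed
  have invB: "flip a E (flip a E s) = s" if "s \<in> ?B" for s
  proof -
    have "E < length s" using good_E[OF assms(1,5,6)] that unfolding E_def by blast
    then show ?thesis by (rule flip_flip)
  qed
  have "card ?A \<le> card ?B"
    by (rule card_inj_on_le[of "flip a E"]) (use AB invA finite_perms in \<open>auto intro: inj_on_inverseI\<close>)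
  moreover have "card ?B \<le> card ?A"
    by (rule card_inj_on_le[of "flip a E"]) (use BA invB finite_perms in \<open>auto intro: inj_on_inverseI\<close>)
  ultimately show ?thesis unfolding P'_def by simp
qed



definition PF :: "nat \<Rightarrow> (nat \<Rightarrow> nat \<Rightarrow> bool) \<Rightarrow> nat set \<Rightarrow> nat \<Rightarrow> nat \<Rightarrow> nat \<Rightarrow> bool" where
  "PF m R F j = (if j \<in> F then rcR m R else R)"

definition closedF :: "nat \<Rightarrow> nat set \<Rightarrow> nat set \<Rightarrow> bool" where
  "closedF k T F \<longleftrightarrow> (\<forall>j\<in>F. j + k \<in> T \<longrightarrow> j + k \<in> F) \<and> (\<forall>j\<in>T. j + k \<in> F \<longrightarrow> j \<in> F)"

lemma closed_ind:
  assumes "2 \<le> m" "1 \<le> k" "k + 2 \<le> m" "adm m k T" "finite T" "mmf m R" "bnd m R"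
  shows "F \<subseteq> T \<Longrightarrow> closedF k T F \<Longrightarrow>
    card {s. is_perm n s \<and> good m T (PF m R F) s} = card {s. is_perm n s \<and> good m T (PF m R T) s}"
proof (induction "card (T - F)" arbitrary: F rule: less_induct)
  case less
  show ?case
  proof (cases "F = T")
    case True then show ?thesis by simp
  next
    case False
    then have ne: "T - F \<noteq> {}" using less.prems by auto
    define a where "a = Min (T - F)"
    have aTF: "a \<in> T - F" unfolding a_def using ne assms(5) by (intro Min_in) auto
    have amin: "\<And>t. t \<in> T - F \<Longrightarrow> a \<le> t" unfolding a_def using assms(5) by (intro Min_le) auto
    have cl1: "\<And>j. j \<in> F \<Longrightarrow> j + k \<in> T \<Longrightarrow> j + k \<in> F" and cl2: "\<And>j. j \<in> T \<Longrightarrow> j + k \<in> F \<Longrightarrow> j \<in> F"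
      using less.prems(2) unfolding closedF_def by auto
    have nopred: "\<forall>t\<in>T. t + k \<noteq> a"
    proof (intro ballI notI)
      fix t assume t: "t \<in> T" "t + k = a"
      show False
      proof (cases "t \<in> F")
        case True then show False using cl1[OF True] t aTF by auto
      next
        case False then have "a \<le> t" using amin t by auto
        then show False using t assms(2) by simp
      qed
    qed
    have ex: "\<exists>r. a + r * k \<notin> T"
    proof
      have "Suc (Max T) * 1 \<le> Suc (Max T) * k" using assms(2) by (rule mult_le_mono2)
      then have "Max T < a + Suc (Max T) * k" by simp
      then show "a + Suc (Max T) * k \<notin> T" using Max_ge[OF assms(5)] by fastforce
    qed
    define r where "r = (LEAST r. a + r * k \<notin> T)"
    have rnot: "a + r * k \<notin> T" unfolding r_def by (rule LeastI_ex[OF ex])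
    have rin: "\<forall>i<r. a + i * k \<in> T" unfolding r_def using not_less_Least by blast
    have r1: "1 \<le> r" using rnot aTF by (cases r) auto
    have CnF: "i < r \<Longrightarrow> a + i * k \<notin> F" for i
    proof (induction i)
      case 0 then show ?case using aTF by simp
    next
      case (Suc i)
      have "a + i * k \<in> T" using rin Suc.prems by simp
      moreover have "a + i * k \<notin> F" using Suc by simp
      moreover have "a + Suc i * k = a + i * k + k" by simp
      ultimately show ?case using cl2[of "a + i * k"] by metis
    qed
    define C where "C = {j. \<exists>i<r. j = a + i * k}"
    have PonC: "\<forall>i<r. PF m R F (a + i * k) = R" using CnF unfolding PF_def by auto
    have eqP: "(\<lambda>j. if (\<exists>i<r. j = a + i * k) then rcR m R else PF m R F j) = PF m R (F \<union> C)"
    proof (rule ext)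
      fix j show "(if (\<exists>i<r. j = a + i * k) then rcR m R else PF m R F j) = PF m R (F \<union> C) j"
      proof (cases "\<exists>i<r. j = a + i * k")
        case True then show ?thesis unfolding PF_def C_def by simp
      next
        case False
        then have "j \<notin> C" unfolding C_def by simp
        then show ?thesis unfolding PF_def if_not_P[OF False] by simp
      qed
    qed
    have step: "card {s. is_perm n s \<and> good m T (PF m R F) s} = card {s. is_perm n s \<and> good m T (PF m R (F \<union> C)) s}"
      using flip_count[OF assms(1-4) r1 rin rnot nopred PonC assms(6,7), of n] unfolding eqP .
    have sub: "F \<union> C \<subseteq> T" using less.prems(1) rin unfolding C_def by auto
    have clo: "closedF k T (F \<union> C)"
      unfolding closedF_def
    proof (intro conjI ballI impI)
      fix j assume j: "j \<in> F \<union> C" "j + k \<in> T"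
      show "j + k \<in> F \<union> C"
      proof (cases "j \<in> F")
        case True then show ?thesis using cl1 j by auto
      next
        case False
        then obtain i where i: "i < r" "j = a + i * k" using j unfolding C_def by auto
        have "Suc i < r"
        proof (rule ccontr)
          assume "\<not> Suc i < r" then have "Suc i = r" using i by simp
          moreover have "j + k = a + Suc i * k" using i(2) by simp
          ultimately show False using rnot j(2) by metis
        qed
        then show ?thesis unfolding C_def using i by (auto intro!: exI[of _ "Suc i"] simp: add.assoc add.commute)
      qed
    next
      fix j assume j: "j \<in> T" "j + k \<in> F \<union> C"
      show "j \<in> F \<union> C"
      proof (cases "j + k \<in> F")
        case True then show ?thesis using cl2 j by auto
      next
        case False
        then obtain i where i: "i < r" "j + k = a + i * k" using j unfolding C_def by auto
        show ?thesis
        proof (cases i)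
          case 0 then show ?thesis using nopred j i by auto
        next
          case (Suc i')
          then have "j = a + i' * k" using i by simp
          moreover have "i' < r" using Suc i by simp
          ultimately have "j \<in> C" unfolding C_def by blast
          then show ?thesis by simp
        qed
      qed
    qed
    have "a \<in> C" unfolding C_def using r1 by (intro CollectI exI[of _ 0]) simp
    then have "a \<notin> T - (F \<union> C)" by simp
    then have "T - (F \<union> C) \<subset> T - F" using aTF by auto
    then have "card (T - (F \<union> C)) < card (T - F)" using assms(5) by (intro psubset_card_mono) auto
    then have "card {s. is_perm n s \<and> good m T (PF m R (F \<union> C)) s} = card {s. is_perm n s \<and> good m T (PF m R T) s}"
      using less.hyps sub clo by blast
    then show ?thesis using step by simp
  qed
qed

lemma ovl_occ: assumes "occ m Q s i" "occ m Q s j" "i < j" "j < i + m" shows "ovl m Q (j - i)"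
  unfolding ovl_def
proof (intro allI impI)
  fix x y assume xy: "x < m - (j - i)" "y < m - (j - i)"
  have "(s ! (i + (j - i + x)) < s ! (i + (j - i + y))) = Q (j - i + x) (j - i + y)"
    using assms(1) xy unfolding occ_def by auto
  moreover have "(s ! (j + x) < s ! (j + y)) = Q x y" using assms(2) xy unfolding occ_def by auto
  moreover have "i + (j - i + x) = j + x" "i + (j - i + y) = j + y" using assms by auto
  ultimately show "Q (j - i + x) (j - i + y) = Q x y" by simp
qed

lemma ovl_rcR: assumes "d \<le> m" "ovl m (rcR m R) d" shows "ovl m R d"
  unfolding ovl_def
proof (intro allI impI)
  fix x y assume xy: "x < m - d" "y < m - d"
  define x' where "x' = m - 1 - d - y"
  define y' where "y' = m - 1 - d - x"
  have b: "x' < m - d" "y' < m - d" using xy unfolding x'_def y'_def by auto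
  have "rcR m R (d + x') (d + y') = rcR m R x' y'" using assms(2) b unfolding ovl_def by blast
  moreover have "rcR m R (d + x') (d + y') = R x y"
    unfolding rcR_def using xy b unfolding x'_def y'_def
    by (auto simp: diff_diff_left)
  moreover have "rcR m R x' y' = R (d + x) (d + y)"
    unfolding rcR_def using xy b unfolding x'_def y'_def by (auto simp: diff_diff_left)
  ultimately show "R (d + x) (d + y) = R x y" by simp
qed



lemma st_nth: "x < length w \<Longrightarrow> st w ! x = card {y \<in> set w. y < w ! x} + 1"
  by (simp add: st_def)

lemma st_less: assumes "x < length w" "y < length w"
  shows "(st w ! x < st w ! y) = (w ! x < w ! y)"
proof (cases "w ! x < w ! y")
  case True
  have "{z \<in> set w. z < w ! x} \<subset> {z \<in> set w. z < w ! y}"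
    using True assms nth_mem by fastforce
  then have "card {z \<in> set w. z < w ! x} < card {z \<in> set w. z < w ! y}" by (intro psubset_card_mono) auto
  then show ?thesis using True assms by (simp add: st_nth)
next
  case False
  have "{z \<in> set w. z < w ! y} \<subseteq> {z \<in> set w. z < w ! x}" using False by auto
  then have "card {z \<in> set w. z < w ! y} \<le> card {z \<in> set w. z < w ! x}" by (intro card_mono) auto
  then show ?thesis using False assms by (simp add: st_nth)
qed

lemma card_below: assumes "distinct w" "v = w ! x" "x < length w"
  shows "card {y \<in> set w. y < v} = card {i. i < length w \<and> w ! i < v}"
proof -
  have "{y \<in> set w. y < v} = (\<lambda>i. w ! i) ` {i. i < length w \<and> w ! i < v}"
    by (auto simp: in_set_conv_nth)
  moreover have "inj_on (\<lambda>i. w ! i) {i. i < length w \<and> w ! i < v}"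
    using assms(1) by (intro inj_on_nth) auto
  ultimately show ?thesis by (simp add: card_image)
qed

lemma st_eq_iff: assumes "distinct w1" "distinct w2" "length w1 = length w2"
  shows "st w1 = st w2 \<longleftrightarrow> (\<forall>x<length w1. \<forall>y<length w1. (w1 ! x < w1 ! y) = (w2 ! x < w2 ! y))"
proof
  assume "st w1 = st w2"
  then show "\<forall>x<length w1. \<forall>y<length w1. (w1 ! x < w1 ! y) = (w2 ! x < w2 ! y)"
    using st_less assms(3) by metis
next
  assume h: "\<forall>x<length w1. \<forall>y<length w1. (w1 ! x < w1 ! y) = (w2 ! x < w2 ! y)"
  show "st w1 = st w2"
  proof (rule nth_equalityI)
    show "length (st w1) = length (st w2)" using assms by (simp add: st_def)
    fix x assume "x < length (st w1)"
    then have x: "x < length w1" by (simp add: st_def)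
    have "{i. i < length w1 \<and> w1 ! i < w1 ! x} = {i. i < length w2 \<and> w2 ! i < w2 ! x}"
      using h x assms(3) by auto
    then show "st w1 ! x = st w2 ! x"
      using x assms card_below[OF assms(1) refl x] card_below[OF assms(2) refl, of x] by (simp add: st_nth)
  qed
qed

lemma st_perm: assumes "is_perm m q" shows "st q = q"
proof (rule nth_equalityI)
  show "length (st q) = length q" by (simp add: st_def)
  fix x assume "x < length (st q)"
  then have x: "x < length q" by (simp add: st_def)
  have v: "q ! x \<in> {1..m}" using assms x nth_mem unfolding is_perm_def by blast
  have "{y \<in> set q. y < q ! x} = {1..<q ! x}" using assms v unfolding is_perm_def by auto
  then show "st q ! x = q ! x" using x v by (simp add: st_nth)
qed

definition Rp :: "nat \<Rightarrow> nat list \<Rightarrow> nat \<Rightarrow> nat \<Rightarrow> bool" where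
  "Rp m q x y \<longleftrightarrow> x < m \<and> y < m \<and> q ! x < q ! y"

lemma Em_char: assumes "is_perm m q" "is_perm n s"
  shows "Em q s = Suc ` {j. occ m (Rp m q) s j}"
proof -
  have lq: "length q = m" and dq: "distinct q" and ls: "length s = n" and ds: "distinct s"
    using assms unfolding is_perm_def by auto
  have "i \<in> Em q s \<longleftrightarrow> 1 \<le> i \<and> occ m (Rp m q) s (i - 1)" for i
  proof (cases "1 \<le> i \<and> i + m \<le> n + 1")
    case True
    let ?w = "take m (drop (i - 1) s)"
    have lw: "length ?w = m" using True ls by auto
    have wn: "\<And>x. x < m \<Longrightarrow> ?w ! x = s ! (i - 1 + x)" using True ls by auto
    have dw: "distinct ?w" using ds by (simp add: distinct_take distinct_drop)
    have "st ?w = q \<longleftrightarrow> st ?w = st q" using st_perm[OF assms(1)] by simp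
    also have "\<dots> \<longleftrightarrow> (\<forall>x<m. \<forall>y<m. (?w ! x < ?w ! y) = (q ! x < q ! y))"
      using st_eq_iff[OF dw dq] lw lq by simp
    also have "\<dots> \<longleftrightarrow> occ m (Rp m q) s (i - 1)"
      unfolding occ_def Rp_def using wn True ls by auto
    finally show ?thesis unfolding Em_def using True lq ls by auto
  next
    case False
    then show ?thesis unfolding Em_def occ_def using lq ls by auto
  qed
  note c = this
  show ?thesis
  proof (rule set_eqI)
    fix i show "i \<in> Em q s \<longleftrightarrow> i \<in> Suc ` {j. occ m (Rp m q) s j}"
      using c[of i] by (cases i) auto
  qed
qed



lemma main_abs:
  assumes "2 \<le> m" "1 \<le> k" "k + 2 \<le> m" "mmf m R" "bnd m R"
    "\<forall>d. 1 \<le> d \<longrightarrow> d + 2 \<le> m \<longrightarrow> ovl m R d \<longrightarrow> d = k"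
  shows "card {s. is_perm n s \<and> T \<subseteq> {j. occ m R s j}} = card {s. is_perm n s \<and> T \<subseteq> {j. occ m (rcR m R) s j}}"
proof -
  have g1: "T \<subseteq> {j. occ m R s j} \<longleftrightarrow> good m T (PF m R {}) s" for s
    by (auto simp: good_def PF_def)
  have g2: "T \<subseteq> {j. occ m (rcR m R) s j} \<longleftrightarrow> good m T (PF m R T) s" for s
    by (auto simp: good_def PF_def)
  have finE: "finite {j. occ m Q s j}" for Q s
    by (rule finite_subset[of _ "{..length s}"]) (auto simp: occ_def)
  show ?thesis
  proof (cases "finite T")
    case False
    then have "\<not> T \<subseteq> {j. occ m Q s j}" for Q s using finE finite_subset by blast
    then show ?thesis by simp
  next
    case fin: True
    show ?thesis
    proof (cases "adm m k T")
      case True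
      have "closedF k T {}" unfolding closedF_def by simp
      then show ?thesis unfolding g1 g2
        using closed_ind[OF assms(1,2,3) True fin assms(4,5), of "{}" n] by simp
    next
      case False
      then obtain i j where ij: "i \<in> T" "j \<in> T" "i < j" "j - i \<noteq> k" "j - i < m - 1"
        unfolding adm_def by force
      have bad: "\<not> (occ m Q s i \<and> occ m Q s j)" if "\<forall>d. d \<le> m \<longrightarrow> ovl m Q d \<longrightarrow> ovl m R d" for Q s
      proof
        assume "occ m Q s i \<and> occ m Q s j"
        then have "ovl m Q (j - i)" using ovl_occ ij by force
        then have "ovl m R (j - i)" using that ij by simp
        then show False using assms(6) ij by force
      qed
      have e1: "{s. is_perm n s \<and> T \<subseteq> {j. occ m R s j}} = {}"
        using bad[of R] ij by blast
      have e2: "{s. is_perm n s \<and> T \<subseteq> {j. occ m (rcR m R) s j}} = {}"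
        using bad[of "rcR m R"] ij ovl_rcR by blast
      show ?thesis unfolding e1 e2 ..
    qed
  qed
qed

lemma count_sum:
  fixes G :: "'a \<Rightarrow> nat set"
  assumes "finite X" "finite U" "\<forall>s\<in>X. G s \<subseteq> U"
  shows "card {s\<in>X. T \<subseteq> G s} = (\<Sum>S'\<in>{S'. T \<subseteq> S' \<and> S' \<subseteq> U}. card {s\<in>X. G s = S'})"
proof -
  have fI: "finite {S'. T \<subseteq> S' \<and> S' \<subseteq> U}" using assms(2) by (rule finite_subset[rotated, OF finite_Pow_iff[THEN iffD2]]) auto
  have "{s\<in>X. T \<subseteq> G s} = (\<Union>S'\<in>{S'. T \<subseteq> S' \<and> S' \<subseteq> U}. {s\<in>X. G s = S'})" using assms(3) by auto
  moreover have "card (\<Union>S'\<in>{S'. T \<subseteq> S' \<and> S' \<subseteq> U}. {s\<in>X. G s = S'}) = (\<Sum>S'\<in>{S'. T \<subseteq> S' \<and> S' \<subseteq> U}. card {s\<in>X. G s = S'})"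
    by (rule card_UN_disjoint[OF fI]) (use assms(1) in auto)
  ultimately show ?thesis by simp
qed

lemma mobius:
  fixes G1 G2 :: "'a \<Rightarrow> nat set"
  assumes "finite X" "finite U" "\<forall>s\<in>X. G1 s \<subseteq> U" "\<forall>s\<in>X. G2 s \<subseteq> U"
    "\<forall>T. card {s\<in>X. T \<subseteq> G1 s} = card {s\<in>X. T \<subseteq> G2 s}"
  shows "card {s\<in>X. G1 s = S} = card {s\<in>X. G2 s = S}"
proof (cases "S \<subseteq> U")
  case False
  have e1: "{s\<in>X. G1 s = S} = {}" and e2: "{s\<in>X. G2 s = S} = {}" using assms(3,4) False by auto
  show ?thesis unfolding e1 e2 by (rule refl)
next
  case True
  then show ?thesis
  proof (induction "card (U - S)" arbitrary: S rule: less_induct)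
    case less
    let ?I = "{S'. S \<subseteq> S' \<and> S' \<subseteq> U}"
    have fI: "finite ?I" using assms(2) by (rule finite_subset[rotated, OF finite_Pow_iff[THEN iffD2]]) auto
    have SI: "S \<in> ?I" using less.prems by simp
    have IH: "card {s\<in>X. G1 s = S'} = card {s\<in>X. G2 s = S'}" if "S' \<in> ?I - {S}" for S'
    proof -
      have "S \<subset> S'" "S' \<subseteq> U" using that by auto
      then have "U - S' \<subset> U - S" by auto
      then have "card (U - S') < card (U - S)" using assms(2) by (intro psubset_card_mono) auto
      then show ?thesis using less.hyps \<open>S' \<subseteq> U\<close> by blast
    qed
    have "card {s\<in>X. S \<subseteq> G1 s} = card {s\<in>X. G1 s = S} + (\<Sum>S'\<in>?I - {S}. card {s\<in>X. G1 s = S'})"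
      using count_sum[OF assms(1,2,3)] sum.remove[OF fI SI] by simp
    moreover have "card {s\<in>X. S \<subseteq> G2 s} = card {s\<in>X. G2 s = S} + (\<Sum>S'\<in>?I - {S}. card {s\<in>X. G2 s = S'})"
      using count_sum[OF assms(1,2,4)] sum.remove[OF fI SI] by simp
    moreover have "(\<Sum>S'\<in>?I - {S}. card {s\<in>X. G1 s = S'}) = (\<Sum>S'\<in>?I - {S}. card {s\<in>X. G2 s = S'})"
      using IH by (rule sum.cong[OF refl])
    ultimately show ?case using assms(5) by simp
  qed
qed



definition cmp :: "nat \<Rightarrow> nat list \<Rightarrow> nat list" where
  "cmp n s = map (\<lambda>v. Suc n - v) s"

lemma cmp_perm: assumes "is_perm n s" shows "is_perm n (cmp n s)" "cmp n (cmp n s) = s"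
proof -
  have l: "length s = n" and d: "distinct s" and st: "set s = {1..n}" using assms unfolding is_perm_def by auto
  have inj: "inj_on (\<lambda>v. Suc n - v) {1..n}" by (rule inj_onI) auto
  have im: "(\<lambda>v. Suc n - v) ` {1..n} = {1..n}"
  proof
    show "(\<lambda>v. Suc n - v) ` {1..n} \<subseteq> {1..n}" by auto
    show "{1..n} \<subseteq> (\<lambda>v. Suc n - v) ` {1..n}"
    proof
      fix x assume "x \<in> {1..n}"
      then have "Suc n - x \<in> {1..n}" "x = Suc n - (Suc n - x)" by auto
      then show "x \<in> (\<lambda>v. Suc n - v) ` {1..n}" by blast
    qed
  qed
  show "is_perm n (cmp n s)" unfolding is_perm_def cmp_def
    using l d st inj im by (simp add: distinct_map)
  show "cmp n (cmp n s) = s" unfolding cmp_def map_map o_def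
    by (rule map_idI) (use st in auto)
qed

lemma sub_Suc: "T \<subseteq> Suc ` A \<longleftrightarrow> 0 \<notin> T \<and> {j. Suc j \<in> T} \<subseteq> A"
proof
  assume "T \<subseteq> Suc ` A" then show "0 \<notin> T \<and> {j. Suc j \<in> T} \<subseteq> A" by auto
next
  assume h: "0 \<notin> T \<and> {j. Suc j \<in> T} \<subseteq> A"
  show "T \<subseteq> Suc ` A"
  proof
    fix t assume t: "t \<in> T"
    then obtain j where "t = Suc j" using h by (cases t) auto
    then show "t \<in> Suc ` A" using h t by auto
  qed
qed



lemma overlap_char: assumes "is_perm m p"
  shows "overlap_set p = {d. 1 \<le> d \<and> d \<le> m - 1 \<and> ovl m (Rp m p) d}"
proof -
  have lp: "length p = m" and dp: "distinct p" using assms unfolding is_perm_def by auto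
  have "st (drop d p) = st (take (m - d) p) \<longleftrightarrow> ovl m (Rp m p) d" if "d \<le> m - 1" for d
  proof -
    have "st (drop d p) = st (take (m - d) p) \<longleftrightarrow>
      (\<forall>x<m - d. \<forall>y<m - d. (drop d p ! x < drop d p ! y) = (take (m - d) p ! x < take (m - d) p ! y))"
      using st_eq_iff[of "drop d p" "take (m - d) p"] dp lp by (simp add: distinct_drop distinct_take)
    also have "\<dots> \<longleftrightarrow> ovl m (Rp m p) d"
    proof -
      have e: "\<And>x y. x < m - d \<Longrightarrow> y < m - d \<Longrightarrow> (Rp m p (d + x) (d + y) = Rp m p x y) =
          ((drop d p ! x < drop d p ! y) = (take (m - d) p ! x < take (m - d) p ! y))"
        using lp by (auto simp: Rp_def)
      show ?thesis unfolding ovl_def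
      proof
        assume L: "\<forall>x<m - d. \<forall>y<m - d. (drop d p ! x < drop d p ! y) = (take (m - d) p ! x < take (m - d) p ! y)"
        show "\<forall>x<m - d. \<forall>y<m - d. Rp m p (d + x) (d + y) = Rp m p x y"
        proof (intro allI impI)
          fix x y assume "x < m - d" "y < m - d" then show "Rp m p (d + x) (d + y) = Rp m p x y" using L e by blast
        qed
      next
        assume L: "\<forall>x<m - d. \<forall>y<m - d. Rp m p (d + x) (d + y) = Rp m p x y"
        show "\<forall>x<m - d. \<forall>y<m - d. (drop d p ! x < drop d p ! y) = (take (m - d) p ! x < take (m - d) p ! y)"
        proof (intro allI impI)
          fix x y assume "x < m - d" "y < m - d" then show "(drop d p ! x < drop d p ! y) = (take (m - d) p ! x < take (m - d) p ! y)" using L e by blast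
        qed
      qed
    qed
    finally show ?thesis .
  qed
  then show ?thesis unfolding overlap_set_def lp by auto
qed

lemma occ_rev: assumes "is_perm m p" "is_perm n s"
  shows "occ m (Rp m (rev p)) s j \<longleftrightarrow> occ m (rcR m (Rp m p)) (cmp n s) j"
proof -
  have lp: "length p = m" using assms unfolding is_perm_def by auto
  have ls: "length s = n" and ss: "set s = {1..n}" using assms unfolding is_perm_def by auto
  have pt: "((cmp n s ! (j + x) < cmp n s ! (j + y)) = rcR m (Rp m p) x y) \<longleftrightarrow>
            ((s ! (j + y) < s ! (j + x)) = Rp m (rev p) y x)"
    if "x < m" "y < m" "j + m \<le> n" for x y
  proof -
    have "s ! (j + x) \<in> {1..n}" "s ! (j + y) \<in> {1..n}" using that ls ss nth_mem by (metis add_less_cancel_left less_le_trans)+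
    then have c: "(cmp n s ! (j + x) < cmp n s ! (j + y)) = (s ! (j + y) < s ! (j + x))"
      using that ls unfolding cmp_def by auto
    have r: "rcR m (Rp m p) x y = Rp m (rev p) y x"
      unfolding rcR_def Rp_def using that lp by (auto simp: rev_nth)
    show ?thesis unfolding c r ..
  qed
  show ?thesis
  proof
    assume o: "occ m (Rp m (rev p)) s j"
    then have jm: "j + m \<le> n" using ls unfolding occ_def by simp
    show "occ m (rcR m (Rp m p)) (cmp n s) j" unfolding occ_def
      using o pt[OF _ _ jm] jm ls unfolding occ_def cmp_def by auto
  next
    assume o: "occ m (rcR m (Rp m p)) (cmp n s) j"
    then have jm: "j + m \<le> n" using ls unfolding occ_def cmp_def by simp
    show "occ m (Rp m (rev p)) s j" unfolding occ_def
      using o pt[OF _ _ jm] jm ls unfolding occ_def cmp_def by auto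
  qed
qed

theorem theorem5p6:
  fixes m :: nat and p :: "nat list"
  assumes "is_perm m p"
    and "p ! 0 = 1"
    and "p ! (m - 1) = m"
    and "card (overlap_set p) = 2"
  shows "super_strongly_cWilf_equiv p (rev p)"
proof -
  let ?R = "Rp m p"
  let ?O = "overlap_set p"
  have lp: "length p = m" and dp: "distinct p" and sp: "set p = {1..m}" using assms(1) unfolding is_perm_def by auto
  note oc = overlap_char[OF assms(1)]
  have finO: "finite ?O" unfolding oc by (rule finite_subset[of _ "{..m}"]) auto
  have m2: "2 \<le> m"
  proof (rule ccontr)
    assume "\<not> 2 \<le> m" then have "?O = {}" unfolding oc by auto
    then show False using assms(4) by simp
  qed
  have mO: "m - 1 \<in> ?O" unfolding oc ovl_def Rp_def using m2 by auto
  obtain k where kO: "k \<in> ?O" and km: "k \<noteq> m - 1"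
  proof -
    have "?O \<noteq> {m - 1}" using assms(4) by auto
    then show ?thesis using that mO by blast
  qed
  have k1: "1 \<le> k" and k2: "k + 2 \<le> m" and kov: "ovl m ?R k" using kO km m2 unfolding oc by auto
  have uniq: "\<forall>d. 1 \<le> d \<longrightarrow> d + 2 \<le> m \<longrightarrow> ovl m ?R d \<longrightarrow> d = k"
  proof (intro allI impI, rule ccontr)
    fix d assume d: "1 \<le> d" "d + 2 \<le> m" "ovl m ?R d" "d \<noteq> k"
    then have "{d, k, m - 1} \<subseteq> ?O" using kO mO unfolding oc by auto
    then have "card {d, k, m - 1} \<le> card ?O" by (rule card_mono[OF finO])
    then have "card {d, k, m - 1} \<le> 2" using assms(4) by simp
    moreover have "card {d, k, m - 1} = 3" using d km by auto
    ultimately show False by simp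
  qed
  have mm1: "Rp m p 0 x" if x: "0 < x" "x < m" for x
    unfolding Rp_def
  proof -
    have "p ! x \<in> {1..m}" using x lp sp nth_mem by blast
    moreover have "p ! x \<noteq> p ! 0" using x dp lp nth_eq_iff_index_eq by fastforce
    ultimately show "0 < m \<and> x < m \<and> p ! 0 < p ! x" using x assms(2) by auto
  qed
  have mm2: "Rp m p x (m - 1)" if x: "x < m - 1" for x
    unfolding Rp_def
  proof -
    have "x < length p" using x lp by simp
    then have "p ! x \<in> {1..m}" using sp nth_mem by blast
    moreover have "p ! x \<noteq> p ! (m - 1)" using x dp lp nth_eq_iff_index_eq m2 by fastforce
    ultimately show "x < m \<and> m - 1 < m \<and> p ! x < p ! (m - 1)" using x assms(3) m2 by auto
  qed
  have mmf: "mmf m ?R" unfolding mmf_def using mm1 mm2 by blast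
  have bnd: "bnd m ?R" unfolding bnd_def Rp_def by auto
  have rp: "is_perm m (rev p)" using assms(1) unfolding is_perm_def by simp
  show ?thesis unfolding super_strongly_cWilf_equiv_def
  proof (intro allI)
    fix n S
    let ?X = "{s. is_perm n s}"
    define G1 where "G1 = (\<lambda>s. Suc ` {j. occ m ?R s j})"
    define G2 where "G2 = (\<lambda>s. Suc ` {j. occ m (rcR m ?R) s j})"
    have A1: "a_count p n S = card {s\<in>?X. G1 s = S}"
      unfolding a_count_def G1_def using Em_char[OF assms(1)] by (intro arg_cong[where f=card]) auto
    have "a_count (rev p) n S = card {s\<in>?X. G2 (cmp n s) = S}"
      unfolding a_count_def G2_def using Em_char[OF rp] occ_rev[OF assms(1)]
      by (intro arg_cong[where f=card]) auto
    also have "\<dots> = card {s\<in>?X. G2 s = S}"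
    proof -
      have inj: "inj_on (cmp n) {s\<in>?X. G2 (cmp n s) = S}"
        by (rule inj_on_inverseI[of _ "cmp n"]) (use cmp_perm in auto)
      have "cmp n ` {s\<in>?X. G2 (cmp n s) = S} = {s\<in>?X. G2 s = S}"
      proof
        show "cmp n ` {s\<in>?X. G2 (cmp n s) = S} \<subseteq> {s\<in>?X. G2 s = S}" using cmp_perm by auto
        show "{s\<in>?X. G2 s = S} \<subseteq> cmp n ` {s\<in>?X. G2 (cmp n s) = S}"
        proof
          fix s assume s: "s \<in> {s\<in>?X. G2 s = S}"
          then have "cmp n s \<in> {s\<in>?X. G2 (cmp n s) = S}" "s = cmp n (cmp n s)" using cmp_perm by auto
          then show "s \<in> cmp n ` {s\<in>?X. G2 (cmp n s) = S}" by blast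
        qed
      qed
      then show ?thesis using card_image[OF inj] by simp
    qed
    also have "card {s\<in>?X. G2 s = S} = card {s\<in>?X. G1 s = S}"
    proof (rule sym, rule mobius[where U = "{..n}"])
      show "finite ?X" using finite_perms[of n "\<lambda>_. True"] by simp
      show "finite {..n}" by simp
      show "\<forall>s\<in>?X. G1 s \<subseteq> {..n}" unfolding G1_def occ_def is_perm_def using m2 by auto
      show "\<forall>s\<in>?X. G2 s \<subseteq> {..n}" unfolding G2_def occ_def is_perm_def using m2 by auto
      show "\<forall>T. card {s\<in>?X. T \<subseteq> G1 s} = card {s\<in>?X. T \<subseteq> G2 s}"
      proof
        fix T
        show "card {s\<in>?X. T \<subseteq> G1 s} = card {s\<in>?X. T \<subseteq> G2 s}"
        proof (cases "0 \<in> T")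
          case True
          then show ?thesis unfolding G1_def G2_def sub_Suc by simp
        next
          case False
          then show ?thesis unfolding G1_def G2_def sub_Suc
            using main_abs[OF m2 k1 k2 mmf bnd uniq, of n "{j. Suc j \<in> T}"] by simp
        qed
      qed
    qed
    finally show "a_count p n S = a_count (rev p) n S" using A1 by simp
  qed
qed


end
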